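(* Let $\mathcal{S}:=\{z=(z_1,z_2,z_3,z_{11},z_{12},z_{13},z_{23}): z_{11}=z_1^2,\ z_{ij}=z_iz_j\ (1\le i<j\le3),\ 0\le z_i\le1\ (i=1,2,3)\}$. Then $\mathcal{C}^{\rm SDP+MC+Tri}_3$ is not an extended formulation for $\mathrm{conv}(\mathcal{S})$: the projection of $\mathcal{C}^{\rm SDP+MC+Tri}_3$ onto the coordinates $(x_1,x_2,x_3,Y_{11},Y_{12},Y_{13},Y_{23})$ (identified with $(z_1,z_2,z_3,z_{11},z_{12},z_{13},z_{23})$) is not equal to $\mathrm{conv}(\mathcal{S})$.
   Context: $\mathcal{C}^{\rm SDP}_n$ is the set of $(x,Y)$, $x\in[0,1]^n$, $Y$ symmetric $n\times n$, with $\begin{bmatrix}1&x^\top\\ x&Y\end{bmatrix}\succeq0$ and $Y_{kk}\le x_k$ for all $k$. $\mathcal{C}^{\rm SDP+MC+Tri}_n$ adds, for all $1\le k<l\le n$, $Y_{kl}\ge0$, $Y_{kl}\ge x_k+x_l-1$, $Y_{kl}\le x_k$, $Y_{kl}\le x_l$, and for all $1\le k<l<m\le n$, $Y_{kl}+Y_{km}\le x_k+Y_{lm}$, $Y_{kl}+Y_{lm}\le x_l+Y_{km}$, $Y_{km}+Y_{lm}\le x_m+Y_{kl}$, $x_k+x_l+x_m-Y_{kl}-Y_{km}-Y_{lm}\le1$. *)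

theory Defs
  imports "HOL-Analysis.Analysis"
begin

definition psd :: "nat \<Rightarrow> (nat \<Rightarrow> nat \<Rightarrow> real) \<Rightarrow> bool" where
  "psd m M \<longleftrightarrow> (\<forall>i<m. \<forall>j<m. M i j = M j i) \<and>
     (\<forall>v::nat \<Rightarrow> real. 0 \<le> (\<Sum>i<m. \<Sum>j<m. v i * M i j * v j))"

text \<open>The block matrix [1, x^T; x, Y], indices 0..n, where x and Y use indices 1..n.\<close>
definition lift_mat :: "(nat \<Rightarrow> real) \<Rightarrow> (nat \<Rightarrow> nat \<Rightarrow> real) \<Rightarrow> nat \<Rightarrow> nat \<Rightarrow> real" where
  "lift_mat x Y i j =
     (if i = 0 \<and> j = 0 then 1 else if i = 0 then x j else if j = 0 then x i else Y i j)"

text \<open>C^SDP_n; x is indexed by 1..n, Y by {1..n} x {1..n}; values outside are irrelevant.\<close>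
definition C_SDP :: "nat \<Rightarrow> (nat \<Rightarrow> real) \<Rightarrow> (nat \<Rightarrow> nat \<Rightarrow> real) \<Rightarrow> bool" where
  "C_SDP n x Y \<longleftrightarrow>
     (\<forall>k\<in>{1..n}. 0 \<le> x k \<and> x k \<le> 1) \<and>
     (\<forall>k\<in>{1..n}. \<forall>l\<in>{1..n}. Y k l = Y l k) \<and>
     psd (Suc n) (lift_mat x Y) \<and>
     (\<forall>k\<in>{1..n}. Y k k \<le> x k)"

definition C_SDP_MC_Tri :: "nat \<Rightarrow> (nat \<Rightarrow> real) \<Rightarrow> (nat \<Rightarrow> nat \<Rightarrow> real) \<Rightarrow> bool" where
  "C_SDP_MC_Tri n x Y \<longleftrightarrow> C_SDP n x Y \<and>
     (\<forall>k l. 1 \<le> k \<and> k < l \<and> l \<le> n \<longrightarrow>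
        Y k l \<ge> 0 \<and> Y k l \<ge> x k + x l - 1 \<and> Y k l \<le> x k \<and> Y k l \<le> x l) \<and>
     (\<forall>k l m. 1 \<le> k \<and> k < l \<and> l < m \<and> m \<le> n \<longrightarrow>
        Y k l + Y k m \<le> x k + Y l m \<and>
        Y k l + Y l m \<le> x l + Y k m \<and>
        Y k m + Y l m \<le> x m + Y k l \<and>
        x k + x l + x m - Y k l - Y k m - Y l m \<le> 1)"

end

theory Submission
  imports Defs
begin

definition Tset :: "(real \<times> real \<times> real \<times> real \<times> real \<times> real \<times> real) set" where
  "Tset = {(a,b,c,d,e,f,g). 0 \<le> 25*d - 10*a - 30*e - 30*f + 1 + 15*b + 15*c + 14*g}"

lemma Tset_convex: "convex Tset"
  unfolding convex_def
proof (intro ballI allI impI)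
  fix p q and u v :: real
  assume p: "p \<in> Tset" and q: "q \<in> Tset" and uv: "0 \<le> u" "0 \<le> v" "u + v = 1"
  obtain a1 b1 c1 d1 e1 f1 g1 where pe: "p = (a1,b1,c1,d1,e1,f1,g1)" by (metis prod_cases7)
  obtain a2 b2 c2 d2 e2 f2 g2 where qe: "q = (a2,b2,c2,d2,e2,f2,g2)" by (metis prod_cases7)
  have h1: "0 \<le> 25*d1 - 10*a1 - 30*e1 - 30*f1 + 1 + 15*b1 + 15*c1 + 14*g1"
    using p pe by (simp add: Tset_def)
  have h2: "0 \<le> 25*d2 - 10*a2 - 30*e2 - 30*f2 + 1 + 15*b2 + 15*c2 + 14*g2"
    using q qe by (simp add: Tset_def)
  have "0 \<le> u * (25*d1 - 10*a1 - 30*e1 - 30*f1 + 1 + 15*b1 + 15*c1 + 14*g1)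
       + v * (25*d2 - 10*a2 - 30*e2 - 30*f2 + 1 + 15*b2 + 15*c2 + 14*g2)"
    using h1 h2 uv by simp
  also have "\<dots> = 25*(u * d1+ v * d2) - 10*(u * a1+ v * a2) - 30*(u * e1+ v * e2) - 30*(u * f1+ v * f2) + (u+v)
       + 15*(u * b1+ v * b2) + 15*(u * c1+ v * c2) + 14*(u * g1+ v * g2)"
    by (simp add: algebra_simps)
  finally show "u *\<^sub>R p + v *\<^sub>R q \<in> Tset"
    using uv(3) by (simp add: pe qe Tset_def)
qed

lemma F_nonneg:
  fixes z1 z2 z3 :: real
  assumes "0 \<le> z1" "z1 \<le> 1" "0 \<le> z2" "z2 \<le> 1" "0 \<le> z3" "z3 \<le> 1"
  shows "0 \<le> 25*z1^2 - 10*z1 - 30*(z1*z2) - 30*(z1*z3) + 1 + 15*z2 + 15*z3 + 14*(z2*z3)"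
proof -
  have id: "25*z1^2 - 10*z1 - 30*(z1*z2) - 30*(z1*z3) + 1 + 15*z2 + 15*z3 + 14*(z2*z3)
    = ((1-z2)*(1-z3))*(5*z1-1)^2 + (z2*(1-z3))*(5*z1-4)^2 + ((1-z2)*z3)*(5*z1-4)^2
      + (z2*z3)*((1-z1)*(45-25*z1))"
    by (simp add: algebra_simps power2_eq_square)
  have a: "0 \<le> (1-z2)*(1-z3)" "0 \<le> z2*(1-z3)" "0 \<le> (1-z2)*z3" "0 \<le> z2*z3"
    "0 \<le> (1-z1)*(45-25*z1)" using assms by auto
  have b: "0 \<le> ((1-z2)*(1-z3))*(5*z1-1)^2" "0 \<le> (z2*(1-z3))*(5*z1-4)^2"
    "0 \<le> ((1-z2)*z3)*(5*z1-4)^2" "0 \<le> (z2*z3)*((1-z1)*(45-25*z1))"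
    using a by (simp_all add: mult_nonneg_nonneg)
  show ?thesis unfolding id using b by linarith
qed

lemma hull_sub:
  "convex hull {(z1, z2, z3, z1^2, z1*z2, z1*z3, z2*z3) | z1 z2 z3 :: real.
            0 \<le> z1 \<and> z1 \<le> 1 \<and> 0 \<le> z2 \<and> z2 \<le> 1 \<and> 0 \<le> z3 \<and> z3 \<le> 1} \<subseteq> Tset"
  apply (rule hull_minimal)
  using F_nonneg apply (auto simp: Tset_def)[1]
  by (rule Tset_convex)

definition xp :: "nat \<Rightarrow> real" where
  "xp i = (if i = 1 then 7/10 else 1/2)"

definition Yp :: "nat \<Rightarrow> nat \<Rightarrow> real" where
  "Yp i j = (if i = 1 \<and> j = 1 then 57/100 else if i = 1 \<or> j = 1 then 9/20
     else if i = j then 1/2 else 1/4)"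

lemma psd_p: "psd 4 (lift_mat xp Yp)"
  unfolding psd_def
proof (intro conjI allI impI)
  fix i j :: nat assume "i < 4" "j < 4"
  then show "lift_mat xp Yp i j = lift_mat xp Yp j i"
    by (auto simp: lift_mat_def Yp_def)
next
  fix v :: "nat \<Rightarrow> real"
  have e: "(\<Sum>i<4. \<Sum>j<4. v i * lift_mat xp Yp i j * v j) =
    ((v 0 + 3/10 * v 1)^2 + (v 0 + 7/10 * v 1 + v 2)^2 + (v 0 + 7/10 * v 1 + v 3)^2
     + (v 0 + 11/10 * v 1 + v 2 + v 3)^2) / 4"
    by (simp add: numeral_eq_Suc lift_mat_def xp_def Yp_def algebra_simps power2_eq_square)
  show "0 \<le> (\<Sum>i<4. \<Sum>j<4. v i * lift_mat xp Yp i j * v j)"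
    unfolding e by simp
qed

lemma C_p: "C_SDP_MC_Tri 3 xp Yp"
proof -
  have s: "Suc 3 = 4" by simp
  have q: "\<And>P. (\<forall>k\<in>{1..3::nat}. P k) \<longleftrightarrow> P 1 \<and> P 2 \<and> P 3"
    by (auto simp: numeral_eq_Suc le_Suc_eq)
  have r2: "\<And>P. (\<forall>k l. 1 \<le> k \<and> k < l \<and> l \<le> (3::nat) \<longrightarrow> P k l) \<longleftrightarrow> P 1 2 \<and> P 1 3 \<and> P 2 3"
    apply (rule iffI)
     apply simp
    apply clarify
    subgoal for P k l
      by (cases "k = 1"; cases "l = 2"; cases "l = 3"; cases "k = 2") auto
    done
  have r3: "\<And>P. (\<forall>k l m. 1 \<le> k \<and> k < l \<and> l < m \<and> m \<le> (3::nat) \<longrightarrow> P k l m) \<longleftrightarrow> P 1 2 3"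
    apply (rule iffI)
     apply simp
    apply clarify
    subgoal for P k l m
      by (subgoal_tac "k = 1 \<and> l = 2 \<and> m = 3") auto
    done
  show ?thesis
    unfolding C_SDP_MC_Tri_def C_SDP_def s q r2 r3
    using psd_p by (simp add: xp_def Yp_def)
qed

theorem corollary2:
  shows "{(x 1, x 2, x 3, Y 1 1, Y 1 2, Y 1 3, Y 2 3) | x Y. C_SDP_MC_Tri 3 x Y}
     \<noteq> convex hull {(z1, z2, z3, z1^2, z1*z2, z1*z3, z2*z3) | z1 z2 z3 :: real.
            0 \<le> z1 \<and> z1 \<le> 1 \<and> 0 \<le> z2 \<and> z2 \<le> 1 \<and> 0 \<le> z3 \<and> z3 \<le> 1}"
proof
  assume eq: "{(x 1, x 2, x 3, Y 1 1, Y 1 2, Y 1 3, Y 2 3) | x Y. C_SDP_MC_Tri 3 x Y}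
     = convex hull {(z1, z2, z3, z1^2, z1*z2, z1*z3, z2*z3) | z1 z2 z3 :: real.
            0 \<le> z1 \<and> z1 \<le> 1 \<and> 0 \<le> z2 \<and> z2 \<le> 1 \<and> 0 \<le> z3 \<and> z3 \<le> 1}"
  have "(xp 1, xp 2, xp 3, Yp 1 1, Yp 1 2, Yp 1 3, Yp 2 3)
      \<in> {(x 1, x 2, x 3, Y 1 1, Y 1 2, Y 1 3, Y 2 3) | x Y. C_SDP_MC_Tri 3 x Y}"
    using C_p by blast
  then have "(xp 1, xp 2, xp 3, Yp 1 1, Yp 1 2, Yp 1 3, Yp 2 3) \<in> Tset"
    using eq hull_sub by auto
  then show False by (simp add: Tset_def xp_def Yp_def)
qed

end
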